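(* Let $G$ be a finite GVZ-group with $|\mathrm{cd}(G)|=2$. Let $N$ be a normal subgroup of $G$ such that $G'\not\subseteq N$ and $[Z(\chi),G]\subseteq N$ for some $\chi\in\mathrm{nl}(G)$. Then $Z(G/N)=Z(\chi)/N$.
   Context: All groups are finite. $\mathrm{Irr}(G)$ is the set of complex irreducible characters of $G$, $\mathrm{nl}(G)$ the set of non-linear irreducible characters, and $\mathrm{cd}(G)=\{\chi(1):\chi\in\mathrm{Irr}(G)\}$. For a character $\chi$, $Z(\chi)=\{g\in G: |\chi(g)|=\chi(1)\}$. A nonabelian group $G$ is a GVZ-group if for every $\chi\in\mathrm{Irr}(G)$ we have $\chi(g)=0$ for all $g\in G\setminus Z(\chi)$. *)

theory Defs
  imports "HOL-Algebra.Algebra" "Jordan_Normal_Form.Matrix"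
begin

definition mat_trace :: "complex mat \<Rightarrow> complex" where
  "mat_trace A = (\<Sum>i<dim_row A. A $$ (i, i))"

definition is_rep :: "('a, 'b) monoid_scheme \<Rightarrow> nat \<Rightarrow> ('a \<Rightarrow> complex mat) \<Rightarrow> bool" where
  "is_rep G n \<rho> \<longleftrightarrow> n > 0 \<and> (\<forall>g\<in>carrier G. \<rho> g \<in> carrier_mat n n)
     \<and> \<rho> \<one>\<^bsub>G\<^esub> = 1\<^sub>m n
     \<and> (\<forall>g\<in>carrier G. \<forall>h\<in>carrier G. \<rho> (g \<otimes>\<^bsub>G\<^esub> h) = \<rho> g * \<rho> h)"

definition invariant_subspace :: "('a, 'b) monoid_scheme \<Rightarrow> nat \<Rightarrow> ('a \<Rightarrow> complex mat) \<Rightarrow> complex vec set \<Rightarrow> bool" where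
  "invariant_subspace G n \<rho> W \<longleftrightarrow> W \<subseteq> carrier_vec n \<and> 0\<^sub>v n \<in> W
     \<and> (\<forall>v\<in>W. \<forall>w\<in>W. v + w \<in> W) \<and> (\<forall>c. \<forall>v\<in>W. c \<cdot>\<^sub>v v \<in> W)
     \<and> (\<forall>g\<in>carrier G. \<forall>v\<in>W. \<rho> g *\<^sub>v v \<in> W)"

definition irr_rep :: "('a, 'b) monoid_scheme \<Rightarrow> nat \<Rightarrow> ('a \<Rightarrow> complex mat) \<Rightarrow> bool" where
  "irr_rep G n \<rho> \<longleftrightarrow> is_rep G n \<rho> \<and>
     (\<forall>W. invariant_subspace G n \<rho> W \<longrightarrow> W = {0\<^sub>v n} \<or> W = carrier_vec n)"

definition character_of :: "('a, 'b) monoid_scheme \<Rightarrow> ('a \<Rightarrow> complex mat) \<Rightarrow> 'a \<Rightarrow> complex" where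
  "character_of G \<rho> = (\<lambda>g. if g \<in> carrier G then mat_trace (\<rho> g) else 0)"

definition Irr :: "('a, 'b) monoid_scheme \<Rightarrow> ('a \<Rightarrow> complex) set" where
  "Irr G = {\<chi>. \<exists>n \<rho>. irr_rep G n \<rho> \<and> \<chi> = character_of G \<rho>}"

definition cd :: "('a, 'b) monoid_scheme \<Rightarrow> complex set" where
  "cd G = (\<lambda>\<chi>. \<chi> \<one>\<^bsub>G\<^esub>) ` Irr G"

definition nl :: "('a, 'b) monoid_scheme \<Rightarrow> ('a \<Rightarrow> complex) set" where
  "nl G = {\<chi> \<in> Irr G. \<chi> \<one>\<^bsub>G\<^esub> \<noteq> 1}"

definition char_center :: "('a, 'b) monoid_scheme \<Rightarrow> ('a \<Rightarrow> complex) \<Rightarrow> 'a set" where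
  "char_center G \<chi> = {g \<in> carrier G. cmod (\<chi> g) = cmod (\<chi> \<one>\<^bsub>G\<^esub>)}"

definition group_center :: "('a, 'b) monoid_scheme \<Rightarrow> 'a set" where
  "group_center G = {z \<in> carrier G. \<forall>g\<in>carrier G. z \<otimes>\<^bsub>G\<^esub> g = g \<otimes>\<^bsub>G\<^esub> z}"

definition comm_subgroup :: "('a, 'b) monoid_scheme \<Rightarrow> 'a set \<Rightarrow> 'a set \<Rightarrow> 'a set" where
  "comm_subgroup G H K = generate G
     {h \<otimes>\<^bsub>G\<^esub> k \<otimes>\<^bsub>G\<^esub> inv\<^bsub>G\<^esub> h \<otimes>\<^bsub>G\<^esub> inv\<^bsub>G\<^esub> k | h k. h \<in> H \<and> k \<in> K}"

definition GVZ :: "('a, 'b) monoid_scheme \<Rightarrow> bool" where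
  "GVZ G \<longleftrightarrow> (\<exists>x\<in>carrier G. \<exists>y\<in>carrier G. x \<otimes>\<^bsub>G\<^esub> y \<noteq> y \<otimes>\<^bsub>G\<^esub> x)
     \<and> (\<forall>\<chi>\<in>Irr G. \<forall>g \<in> carrier G - char_center G \<chi>. \<chi> g = 0)"

end

theory Submission
  imports Defs "Jordan_Normal_Form.Schur_Decomposition" "Jordan_Normal_Form.Spectral_Radius"
    "Jordan_Normal_Form.VS_Connect" "Jordan_Normal_Form.DL_Rank"
begin

context group begin

lemma rep_carrier: "is_rep G n \<rho> \<Longrightarrow> g \<in> carrier G \<Longrightarrow> \<rho> g \<in> carrier_mat n n"
  unfolding is_rep_def by auto

lemma rep_one: "is_rep G n \<rho> \<Longrightarrow> \<rho> \<one> = 1\<^sub>m n"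
  unfolding is_rep_def by auto

lemma rep_mult: "is_rep G n \<rho> \<Longrightarrow> g \<in> carrier G \<Longrightarrow> h \<in> carrier G \<Longrightarrow> \<rho> (g \<otimes> h) = \<rho> g * \<rho> h"
  unfolding is_rep_def by auto

lemma rep_pos: "is_rep G n \<rho> \<Longrightarrow> n > 0"
  unfolding is_rep_def by auto

lemma rep_inv_left: assumes "is_rep G n \<rho>" "g \<in> carrier G"
  shows "\<rho> (inv g) * \<rho> g = 1\<^sub>m n"
proof -
  have "\<rho> (inv g) * \<rho> g = \<rho> (inv g \<otimes> g)" using rep_mult[OF assms(1), of "inv g" g] assms(2) by simp
  also have "\<dots> = 1\<^sub>m n" using assms rep_one by simp
  finally show ?thesis .
qed

lemma rep_inv_right: assumes "is_rep G n \<rho>" "g \<in> carrier G"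
  shows "\<rho> g * \<rho> (inv g) = 1\<^sub>m n"
proof -
  have "\<rho> g * \<rho> (inv g) = \<rho> (g \<otimes> inv g)" using rep_mult[OF assms(1), of g "inv g"] assms(2) by simp
  also have "\<dots> = 1\<^sub>m n" using assms rep_one by simp
  finally show ?thesis .
qed

lemma rep_pow: assumes "is_rep G n \<rho>" "g \<in> carrier G"
  shows "\<rho> (g [^] (k::nat)) = \<rho> g ^\<^sub>m k"
proof (induction k)
  case 0
  then show ?case using rep_one[OF assms(1)] rep_carrier[OF assms] by simp
next
  case (Suc k)
  have "\<rho> (g [^] Suc k) = \<rho> (g [^] k \<otimes> g)" by simp
  also have "\<dots> = \<rho> (g [^] k) * \<rho> g" using rep_mult[OF assms(1)] assms(2) by simp
  finally show ?case using Suc by simp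
qed

lemma rep_pow_order: assumes "is_rep G n \<rho>" "g \<in> carrier G"
  shows "\<rho> g ^\<^sub>m Coset.order G = 1\<^sub>m n"
  using rep_pow[OF assms, of "Coset.order G"] pow_order_eq_1[OF assms(2)] rep_one[OF assms(1)] by simp

lemma rep_inv_pow: assumes "is_rep G n \<rho>" "g \<in> carrier G" "finite (carrier G)"
  shows "\<rho> (inv g) = \<rho> g ^\<^sub>m (Coset.order G - 1)"
proof -
  have o: "Coset.order G > 0" using assms(3) using assms(3) order_gt_0_iff_finite by blast
  have "g [^] (Coset.order G - 1) \<otimes> g = g [^] Coset.order G"
    using o by (metis Suc_diff_1 nat_pow_Suc)
  also have "\<dots> = \<one>" using pow_order_eq_1[OF assms(2)] .
  finally have "g [^] (Coset.order G - 1) = inv g"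
    using assms(2) by (metis nat_pow_closed inv_equality)
  then show ?thesis using rep_pow[OF assms(1,2)] by metis
qed

lemma rep_commute_from_kernel:
  assumes "is_rep G n \<rho>" "a \<in> carrier G" "b \<in> carrier G"
    and "\<rho> (a \<otimes> b \<otimes> inv a \<otimes> inv b) = 1\<^sub>m n"
  shows "\<rho> a * \<rho> b = \<rho> b * \<rho> a"
proof -
  have e: "a \<otimes> b = (a \<otimes> b \<otimes> inv a \<otimes> inv b) \<otimes> (b \<otimes> a)"
    using assms(2,3) by (simp add: m_assoc flip: m_assoc[of "inv b" b a])
  have "\<rho> a * \<rho> b = \<rho> (a \<otimes> b)" using rep_mult assms by simp
  also have "\<dots> = \<rho> (a \<otimes> b \<otimes> inv a \<otimes> inv b) * \<rho> (b \<otimes> a)"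
    by (subst e, rule rep_mult[OF assms(1)], insert assms, auto)
  also have "\<dots> = \<rho> (b \<otimes> a)" using assms rep_carrier[OF assms(1), of "b \<otimes> a"] by simp
  also have "\<dots> = \<rho> b * \<rho> a" using rep_mult assms by simp
  finally show ?thesis .
qed

end

lemma schur_scalar:
  assumes irr: "irr_rep G n \<rho>" and A: "A \<in> carrier_mat n n"
    and comm: "\<forall>g\<in>carrier G. A * \<rho> g = \<rho> g * A"
  shows "\<exists>c. A = c \<cdot>\<^sub>m 1\<^sub>m n"
proof -
  have rep: "is_rep G n \<rho>" using irr unfolding irr_rep_def by auto
  have n: "n > 0" using rep unfolding is_rep_def by auto
  have rc: "\<And>g. g \<in> carrier G \<Longrightarrow> \<rho> g \<in> carrier_mat n n" using rep unfolding is_rep_def by auto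
  from spectrum_non_empty[OF A n] obtain c where "eigenvalue A c" unfolding spectrum_def by auto
  then obtain v where ev: "eigenvector A v c" unfolding eigenvalue_def by auto
  have v: "v \<in> carrier_vec n" "v \<noteq> 0\<^sub>v n" "A *\<^sub>v v = c \<cdot>\<^sub>v v" using ev A unfolding eigenvector_def by auto
  define W where "W = {w \<in> carrier_vec n. A *\<^sub>v w = c \<cdot>\<^sub>v w}"
  have inv: "invariant_subspace G n \<rho> W"
    unfolding invariant_subspace_def
  proof (intro conjI ballI allI)
    show "W \<subseteq> carrier_vec n" unfolding W_def by auto
    show "0\<^sub>v n \<in> W" unfolding W_def using A by auto
    fix x y assume x: "x \<in> W" and y: "y \<in> W"
    then show "x + y \<in> W" unfolding W_def using A
      by (auto simp: mult_add_distrib_mat_vec smult_add_distrib_vec)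
  next
    fix d x assume x: "x \<in> W"
    then show "d \<cdot>\<^sub>v x \<in> W" unfolding W_def using A
      by (auto simp: mult_mat_vec smult_smult_assoc mult.commute)
  next
    fix g x assume g: "g \<in> carrier G" and x: "x \<in> W"
    have xc: "x \<in> carrier_vec n" and ax: "A *\<^sub>v x = c \<cdot>\<^sub>v x" using x unfolding W_def by auto
    have "A *\<^sub>v (\<rho> g *\<^sub>v x) = (A * \<rho> g) *\<^sub>v x" using A rc[OF g] xc by simp
    also have "\<dots> = (\<rho> g * A) *\<^sub>v x" using comm g by simp
    also have "\<dots> = \<rho> g *\<^sub>v (c \<cdot>\<^sub>v x)" using A rc[OF g] xc ax by simp
    also have "\<dots> = c \<cdot>\<^sub>v (\<rho> g *\<^sub>v x)" using rc[OF g] xc by (simp add: mult_mat_vec)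
    finally show "\<rho> g *\<^sub>v x \<in> W" unfolding W_def using rc[OF g] xc by auto
  qed
  have "v \<in> W" using v unfolding W_def by auto
  with inv irr v(2) have Wf: "W = carrier_vec n" unfolding irr_rep_def by auto
  have "A = c \<cdot>\<^sub>m 1\<^sub>m n"
  proof (rule eq_matI)
    fix i j assume i: "i < dim_row (c \<cdot>\<^sub>m 1\<^sub>m n)" and j: "j < dim_col (c \<cdot>\<^sub>m 1\<^sub>m n)"
    have "unit_vec n j \<in> W" using Wf j by auto
    then have e: "A *\<^sub>v unit_vec n j = c \<cdot>\<^sub>v unit_vec n j" unfolding W_def by auto
    have "A $$ (i, j) = (A *\<^sub>v unit_vec n j) $ i" using A i j by (simp add: mult_mat_vec_def)
    also have "\<dots> = (c \<cdot>\<^sub>m 1\<^sub>m n) $$ (i, j)" unfolding e using i j by auto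
    finally show "A $$ (i, j) = (c \<cdot>\<^sub>m 1\<^sub>m n) $$ (i, j)" .
  qed (insert A, auto)
  then show ?thesis by blast
qed

lemma mult_mat_entry:
  assumes "A \<in> carrier_mat n m" "B \<in> carrier_mat m p" "i < n" "l < p"
  shows "(A * B) $$ (i, l) = (\<Sum>q<m. A $$ (i, q) * B $$ (q, l))"
  using assms by (auto simp: scalar_prod_def lessThan_atLeast0 intro!: sum.cong)

context group begin

lemma surj_left_mult: "h \<in> carrier G \<Longrightarrow> (\<lambda>g. h \<otimes> g) ` carrier G = carrier G"
proof
  assume h: "h \<in> carrier G"
  show "(\<lambda>g. h \<otimes> g) ` carrier G \<subseteq> carrier G" using h by auto
  show "carrier G \<subseteq> (\<lambda>g. h \<otimes> g) ` carrier G"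
  proof
    fix x assume x: "x \<in> carrier G"
    have "x = h \<otimes> (inv h \<otimes> x)" using h x by (simp add: m_assoc[symmetric])
    then show "x \<in> (\<lambda>g. h \<otimes> g) ` carrier G" using h x by blast
  qed
qed

lemma inj_left_mult: "h \<in> carrier G \<Longrightarrow> inj_on (\<lambda>g. h \<otimes> g) (carrier G)"
  by (auto simp: inj_on_def)

lemma sum_reindex_left_mult:
  assumes "h \<in> carrier G"
  shows "(\<Sum>g\<in>carrier G. f (h \<otimes> g)) = (\<Sum>g\<in>carrier G. (f g :: 'c :: comm_monoid_add))"
proof -
  have "(\<Sum>g\<in>carrier G. f g) = (\<Sum>g\<in>(\<lambda>g. h \<otimes> g) ` carrier G. f g)" using surj_left_mult[OF assms] by simp
  also have "\<dots> = (\<Sum>g\<in>carrier G. f (h \<otimes> g))" by (rule sum.reindex[OF inj_left_mult[OF assms], unfolded comp_def])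
  finally show ?thesis by simp
qed

lemma schur_orthogonality:
  assumes irr: "irr_rep G n \<rho>" and fin: "finite (carrier G)"
    and ijkl: "i < n" "j < n" "k < n" "l < n"
  shows "(\<Sum>g\<in>carrier G. \<rho> g $$ (i, j) * \<rho> (inv g) $$ (k, l))
     = (if i = l \<and> j = k then of_nat (Coset.order G) / of_nat n else 0)"
proof -
  have rep: "is_rep G n \<rho>" using irr unfolding irr_rep_def by auto
  have n: "n > 0" using rep unfolding is_rep_def by auto
  note rc = rep_carrier[OF rep]
  define T where "T = mat n n (\<lambda>(i, l). \<Sum>g\<in>carrier G. \<rho> g $$ (i, j) * \<rho> (inv g) $$ (k, l))"
  have T: "T \<in> carrier_mat n n" unfolding T_def by auto
  have comm: "\<forall>h\<in>carrier G. T * \<rho> h = \<rho> h * T"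
  proof
    fix h assume h: "h \<in> carrier G"
    show "T * \<rho> h = \<rho> h * T"
    proof (rule eq_matI)
      fix i l assume i: "i < dim_row (\<rho> h * T)" and l: "l < dim_col (\<rho> h * T)"
      then have i: "i < n" and l: "l < n" using rc[OF h] T by auto
      have "(T * \<rho> h) $$ (i, l) = (\<Sum>q<n. T $$ (i, q) * \<rho> h $$ (q, l))"
        by (rule mult_mat_entry[OF T rc[OF h] i l])
      also have "\<dots> = (\<Sum>q<n. \<Sum>g\<in>carrier G. \<rho> g $$ (i, j) * (\<rho> (inv g) $$ (k, q) * \<rho> h $$ (q, l)))"
        unfolding T_def using i by (auto simp: sum_distrib_right mult.assoc intro!: sum.cong)
      also have "\<dots> = (\<Sum>g\<in>carrier G. \<rho> g $$ (i, j) * (\<Sum>q<n. \<rho> (inv g) $$ (k, q) * \<rho> h $$ (q, l)))"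
        by (simp add: sum.swap[of _ "carrier G"] sum_distrib_left)
      also have "\<dots> = (\<Sum>g\<in>carrier G. \<rho> g $$ (i, j) * \<rho> (inv g \<otimes> h) $$ (k, l))"
      proof (rule sum.cong[OF refl])
        fix g assume g: "g \<in> carrier G"
        have "\<rho> (inv g \<otimes> h) $$ (k, l) = (\<rho> (inv g) * \<rho> h) $$ (k, l)" using rep_mult[OF rep, of "inv g" h] g h by simp
        also have "\<dots> = (\<Sum>q<n. \<rho> (inv g) $$ (k, q) * \<rho> h $$ (q, l))"
          by (rule mult_mat_entry[OF rc rc ijkl(3) l], insert g h, auto)
        finally show "\<rho> g $$ (i, j) * (\<Sum>q<n. \<rho> (inv g) $$ (k, q) * \<rho> h $$ (q, l)) = \<rho> g $$ (i, j) * \<rho> (inv g \<otimes> h) $$ (k, l)" by simp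
      qed
      also have "\<dots> = (\<Sum>g\<in>carrier G. \<rho> (h \<otimes> g) $$ (i, j) * \<rho> (inv (h \<otimes> g) \<otimes> h) $$ (k, l))"
        by (rule sum_reindex_left_mult[OF h, symmetric])
      also have "\<dots> = (\<Sum>g\<in>carrier G. (\<Sum>q<n. \<rho> h $$ (i, q) * \<rho> g $$ (q, j)) * \<rho> (inv g) $$ (k, l))"
      proof (rule sum.cong[OF refl])
        fix g assume g: "g \<in> carrier G"
        have e1: "inv (h \<otimes> g) \<otimes> h = inv g" using g h by (simp add: inv_mult_group m_assoc)
        have "\<rho> (h \<otimes> g) $$ (i, j) = (\<rho> h * \<rho> g) $$ (i, j)" using rep_mult[OF rep, of h g] g h by simp
        also have "\<dots> = (\<Sum>q<n. \<rho> h $$ (i, q) * \<rho> g $$ (q, j))"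
          by (rule mult_mat_entry[OF rc rc i ijkl(2)], insert g h, auto)
        finally show "\<rho> (h \<otimes> g) $$ (i, j) * \<rho> (inv (h \<otimes> g) \<otimes> h) $$ (k, l) = (\<Sum>q<n. \<rho> h $$ (i, q) * \<rho> g $$ (q, j)) * \<rho> (inv g) $$ (k, l)"
          unfolding e1 by simp
      qed
      also have "\<dots> = (\<Sum>q<n. \<rho> h $$ (i, q) * (\<Sum>g\<in>carrier G. \<rho> g $$ (q, j) * \<rho> (inv g) $$ (k, l)))"
        by (simp add: sum.swap[of _ "carrier G"] sum_distrib_left sum_distrib_right mult.assoc)
      also have "\<dots> = (\<Sum>q<n. \<rho> h $$ (i, q) * T $$ (q, l))"
        unfolding T_def using l by (auto intro!: sum.cong)
      also have "\<dots> = (\<rho> h * T) $$ (i, l)"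
        by (rule mult_mat_entry[OF rc[OF h] T i l, symmetric])
      finally show "(T * \<rho> h) $$ (i, l) = (\<rho> h * T) $$ (i, l)" .
    qed (insert T rc[OF h], auto)
  qed
  from schur_scalar[OF irr T comm] obtain c where Tc: "T = c \<cdot>\<^sub>m 1\<^sub>m n" by blast
  have "(\<Sum>i<n. T $$ (i, i)) = (\<Sum>i<n. \<Sum>g\<in>carrier G. \<rho> (inv g) $$ (k, i) * \<rho> g $$ (i, j))"
    unfolding T_def by (auto simp: mult.commute intro!: sum.cong)
  also have "\<dots> = (\<Sum>g\<in>carrier G. (\<rho> (inv g) * \<rho> g) $$ (k, j))"
    by (subst sum.swap, rule sum.cong[OF refl], rule mult_mat_entry[symmetric, OF rc rc ijkl(3) ijkl(2)], auto)
  also have "\<dots> = (\<Sum>g\<in>carrier G. (if k = j then 1 else 0))"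
    using rep_inv_left[OF rep] ijkl by (auto intro!: sum.cong)
  also have "\<dots> = (if k = j then of_nat (Coset.order G) else 0)"
    unfolding Coset.order_def by simp
  finally have tr: "(\<Sum>i<n. T $$ (i, i)) = (if k = j then of_nat (Coset.order G) else 0)" .
  have "(\<Sum>i<n. T $$ (i, i)) = of_nat n * c" unfolding Tc by simp
  with tr have c: "c = (if k = j then of_nat (Coset.order G) / of_nat n else 0)"
    using n by (auto simp: field_simps split: if_splits)
  have "(\<Sum>g\<in>carrier G. \<rho> g $$ (i, j) * \<rho> (inv g) $$ (k, l)) = T $$ (i, l)"
    unfolding T_def using ijkl by simp
  also have "\<dots> = (if i = l then c else 0)" unfolding Tc using ijkl by simp
  finally show ?thesis unfolding c by auto
qed

lemma char_orthogonality:
  assumes irr: "irr_rep G n \<rho>" and fin: "finite (carrier G)"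
  shows "(\<Sum>g\<in>carrier G. character_of G \<rho> g * character_of G \<rho> (inv g)) = of_nat (Coset.order G)"
proof -
  have rep: "is_rep G n \<rho>" using irr unfolding irr_rep_def by auto
  have n: "n > 0" using rep unfolding is_rep_def by auto
  note rc = rep_carrier[OF rep]
  have "(\<Sum>g\<in>carrier G. character_of G \<rho> g * character_of G \<rho> (inv g))
     = (\<Sum>g\<in>carrier G. (\<Sum>i<n. \<rho> g $$ (i, i)) * (\<Sum>k<n. \<rho> (inv g) $$ (k, k)))"
    unfolding character_of_def mat_trace_def
  proof (rule sum.cong[OF refl])
    fix g assume g: "g \<in> carrier G"
    have "dim_row (\<rho> g) = n" "dim_row (\<rho> (inv g)) = n" using rc[OF g] rc[of "inv g"] g by auto
    then show "(if g \<in> carrier G then \<Sum>i<dim_row (\<rho> g). \<rho> g $$ (i, i) else 0) *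
         (if inv g \<in> carrier G then \<Sum>i<dim_row (\<rho> (inv g)). \<rho> (inv g) $$ (i, i) else 0) =
         (\<Sum>i<n. \<rho> g $$ (i, i)) * (\<Sum>k<n. \<rho> (inv g) $$ (k, k))" using g by simp
  qed
  also have "\<dots> = (\<Sum>i<n. \<Sum>k<n. \<Sum>g\<in>carrier G. \<rho> g $$ (i, i) * \<rho> (inv g) $$ (k, k))"
    by (simp add: sum_product sum.swap[of _ "carrier G"])
  also have "\<dots> = (\<Sum>i<n. \<Sum>k<n. (if i = k then of_nat (Coset.order G) / of_nat n else 0))"
    using schur_orthogonality[OF irr fin] by (auto intro!: sum.cong)
  also have "\<dots> = of_nat n * (of_nat (Coset.order G) / of_nat n)" by simp
  also have "\<dots> = of_nat (Coset.order G)" using n by simp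
  finally show ?thesis .
qed

end

lemma unit_root_cnj:
  fixes z :: complex
  assumes "z ^ m = 1" "m > 0"
  shows "z ^ (m - 1) = cnj z"
proof -
  have cm: "cmod z ^ m = 1" using assms(1) by (metis norm_one norm_power)
  then have c: "cmod z = 1" using assms(2)
    by (metis cm assms(2) assms(1) power_eq_1_iff norm_cis not_gr_zero)
  then have z0: "z \<noteq> 0" by auto
  have "z ^ (m - 1) * z = 1" using assms by (metis mult.commute not_gr_zero power_eq_if)
  then have "z ^ (m - 1) = inverse z" using z0 by (simp add: field_simps)
  also have "inverse z = cnj z" using c
    using divide_complex_def divide_conv_cnj z0 by auto
  finally show ?thesis .
qed

lemma upper_tri_mult:
  fixes B C :: "'a :: comm_ring_1 mat"
  assumes B: "B \<in> carrier_mat n n" and C: "C \<in> carrier_mat n n"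
    and uB: "upper_triangular B" and uC: "upper_triangular C"
  shows "upper_triangular (B * C)" "\<And>i. i < n \<Longrightarrow> (B * C) $$ (i, i) = B $$ (i, i) * C $$ (i, i)"
proof -
  have zB: "\<And>i j. i < n \<Longrightarrow> j < i \<Longrightarrow> B $$ (i, j) = 0" using uB B unfolding upper_triangular_def by auto
  have zC: "\<And>i j. i < n \<Longrightarrow> j < i \<Longrightarrow> C $$ (i, j) = 0" using uC C unfolding upper_triangular_def by auto
  show "upper_triangular (B * C)" unfolding upper_triangular_def
  proof (intro allI impI)
    fix i j assume i: "i < dim_row (B * C)" and j: "j < i"
    have i': "i < n" using i B by simp
    have "(B * C) $$ (i, j) = (\<Sum>q<n. B $$ (i, q) * C $$ (q, j))"
      using mult_mat_entry[OF B C i'] j i' by simp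
    also have "\<dots> = 0"
    proof (rule sum.neutral, intro ballI)
      fix q assume q: "q \<in> {..<n}"
      show "B $$ (i, q) * C $$ (q, j) = 0"
      proof (cases "q < i")
        case True then show ?thesis using zB i' by simp
      next
        case False then show ?thesis using zC[of q j] q j by simp
      qed
    qed
    finally show "(B * C) $$ (i, j) = 0" .
  qed
  fix i assume i: "i < n"
  have "(B * C) $$ (i, i) = (\<Sum>q<n. B $$ (i, q) * C $$ (q, i))"
    using mult_mat_entry[OF B C i i] .
  also have "\<dots> = B $$ (i, i) * C $$ (i, i) + (\<Sum>q\<in>{..<n} - {i}. B $$ (i, q) * C $$ (q, i))"
    using sum.remove[of "{..<n}" i] i by simp
  also have "(\<Sum>q\<in>{..<n} - {i}. B $$ (i, q) * C $$ (q, i)) = 0"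
  proof (rule sum.neutral, intro ballI)
    fix q assume q: "q \<in> {..<n} - {i}"
    show "B $$ (i, q) * C $$ (q, i) = 0"
    proof (cases "q < i")
      case True then show ?thesis using zB i by simp
    next
      case False then show ?thesis using zC[of q i] q by simp
    qed
  qed
  finally show "(B * C) $$ (i, i) = B $$ (i, i) * C $$ (i, i)" by simp
qed

lemma upper_tri_pow:
  fixes B :: "'a :: comm_ring_1 mat"
  assumes B: "B \<in> carrier_mat n n" and uB: "upper_triangular B"
  shows "upper_triangular (B ^\<^sub>m k) \<and> (\<forall>i<n. (B ^\<^sub>m k) $$ (i, i) = B $$ (i, i) ^ k)"
proof (induction k)
  case 0
  then show ?case using B by (auto simp: upper_triangular_def)
next
  case (Suc k)
  have Bk: "B ^\<^sub>m k \<in> carrier_mat n n" using B by simp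
  show ?case using upper_tri_mult[OF Bk B _ uB] Suc by simp
qed

lemma conj_cancel:
  fixes P Q M1 :: "'a :: comm_ring_1 mat"
  assumes c: "P \<in> carrier_mat n n" "Q \<in> carrier_mat n n" "M1 \<in> carrier_mat n n" and QP: "Q * P = 1\<^sub>m n"
  shows "Q * (P * M1 * Q) * P = M1"
proof -
  have PM: "P * M1 \<in> carrier_mat n n" using c by simp
  have MQ: "M1 * Q \<in> carrier_mat n n" using c by simp
  have "Q * (P * M1 * Q) = Q * (P * (M1 * Q))" using assoc_mult_mat[OF c(1,3,2)] by simp
  also have "\<dots> = (Q * P) * (M1 * Q)" using assoc_mult_mat[OF c(2,1) MQ] by simp
  also have "\<dots> = M1 * Q" using QP MQ by (simp add: left_mult_one_mat)
  finally have "Q * (P * M1 * Q) * P = M1 * Q * P" by simp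
  also have "\<dots> = M1 * (Q * P)" using assoc_mult_mat[OF c(3,2,1)] by simp
  also have "\<dots> = M1" using QP c by (simp add: right_mult_one_mat)
  finally show ?thesis .
qed

lemma conj_mult:
  fixes P Q M1 M2 :: "'a :: comm_ring_1 mat"
  assumes c: "P \<in> carrier_mat n n" "Q \<in> carrier_mat n n" "M1 \<in> carrier_mat n n" "M2 \<in> carrier_mat n n"
    and QP: "Q * P = 1\<^sub>m n"
  shows "(P * M1 * Q) * (P * M2 * Q) = P * (M1 * M2) * Q"
proof -
  have PM1: "P * M1 \<in> carrier_mat n n" using c by simp
  have PM2: "P * M2 \<in> carrier_mat n n" using c by simp
  have PM2Q: "P * M2 * Q \<in> carrier_mat n n" using c by simp
  have M2Q: "M2 * Q \<in> carrier_mat n n" using c by simp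
  have "(P * M1 * Q) * (P * M2 * Q) = (P * M1) * (Q * (P * M2 * Q))"
    using assoc_mult_mat[OF PM1 c(2) PM2Q] .
  also have "P * M2 * Q = P * (M2 * Q)" using assoc_mult_mat[OF c(1,4,2)] .
  also have "Q * (P * (M2 * Q)) = (Q * P) * (M2 * Q)" using assoc_mult_mat[OF c(2,1) M2Q] by simp
  also have "\<dots> = M2 * Q" using QP M2Q by (simp add: left_mult_one_mat)
  also have "P * M1 * (M2 * Q) = P * (M1 * (M2 * Q))" using assoc_mult_mat[OF c(1,3) M2Q] .
  also have "M1 * (M2 * Q) = M1 * M2 * Q" using assoc_mult_mat[OF c(3,4,2)] by simp
  also have "P * (M1 * M2 * Q) = P * (M1 * M2) * Q" using assoc_mult_mat[OF c(1) _ c(2), of "M1 * M2"] c by simp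
  finally show ?thesis using assoc_mult_mat[OF c(1,4,2)] by simp
qed

lemma sim_pow:
  fixes A B P Q :: "'a :: comm_ring_1 mat"
  assumes c: "A \<in> carrier_mat n n" "B \<in> carrier_mat n n" "P \<in> carrier_mat n n" "Q \<in> carrier_mat n n"
    and QP: "Q * P = 1\<^sub>m n" and A: "A = P * B * Q"
  shows "A ^\<^sub>m k = P * B ^\<^sub>m k * Q \<or> k = 0"
proof (induction k)
  case 0 then show ?case by simp
next
  case (Suc k)
  show ?case
  proof (cases k)
    case 0 then show ?thesis using A c by simp
  next
    case (Suc k')
    then have IH: "A ^\<^sub>m k = P * B ^\<^sub>m k * Q" using \<open>A ^\<^sub>m k = P * B ^\<^sub>m k * Q \<or> k = 0\<close> by simp
    have Bk: "B ^\<^sub>m k \<in> carrier_mat n n" using c by simp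
    have "A ^\<^sub>m Suc k = (P * B ^\<^sub>m k * Q) * (P * B * Q)" using IH A by simp
    also have "\<dots> = P * (B ^\<^sub>m k * B) * Q" by (rule conj_mult[OF c(3,4) Bk c(2) QP])
    finally show ?thesis by simp
  qed
qed

lemma trace_comm:
  fixes M N :: "complex mat"
  assumes "M \<in> carrier_mat n m" "N \<in> carrier_mat m n"
  shows "mat_trace (M * N) = mat_trace (N * M)"
proof -
  have d1: "dim_row (M * N) = n" "dim_row (N * M) = m" using assms by auto
  have "mat_trace (M * N) = (\<Sum>i<n. (M * N) $$ (i, i))" unfolding mat_trace_def d1 ..
  also have "\<dots> = (\<Sum>i<n. \<Sum>q<m. M $$ (i, q) * N $$ (q, i))"
    by (rule sum.cong[OF refl], rule mult_mat_entry[OF assms], auto)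
  also have "\<dots> = (\<Sum>q<m. \<Sum>i<n. N $$ (q, i) * M $$ (i, q))"
    by (subst sum.swap, simp add: mult.commute)
  also have "\<dots> = (\<Sum>q<m. (N * M) $$ (q, q))"
    by (rule sum.cong[OF refl], rule mult_mat_entry[symmetric, OF assms(2,1)], auto)
  also have "\<dots> = mat_trace (N * M)" unfolding mat_trace_def d1 ..
  finally show ?thesis .
qed

lemma trace_sim:
  fixes B P Q :: "complex mat"
  assumes c: "B \<in> carrier_mat n n" "P \<in> carrier_mat n n" "Q \<in> carrier_mat n n"
    and QP: "Q * P = 1\<^sub>m n"
  shows "mat_trace (P * B * Q) = mat_trace B"
proof -
  have "mat_trace (P * B * Q) = mat_trace (Q * (P * B))"
    by (rule trace_comm[of _ n n], insert c, auto)
  also have "Q * (P * B) = B" using c QP by (simp add: assoc_mult_mat[symmetric, of _ n n _ n _ n])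
  finally show ?thesis .
qed

lemma trace_pow_pred_cnj:
  fixes A :: "complex mat"
  assumes A: "A \<in> carrier_mat n n" and Am: "A ^\<^sub>m m = 1\<^sub>m n" and m: "m > 0"
  shows "mat_trace (A ^\<^sub>m (m - 1)) = cnj (mat_trace A)"
proof -
  obtain es where es: "char_poly A = (\<Prod>a\<leftarrow>es. [:- a, 1:])" using char_poly_factorized[OF A] by blast
  obtain B where B: "B \<in> carrier_mat n n" "upper_triangular B" "similar_mat A B"
    using schur_decomposition_exists[OF A es] by blast
  obtain P Q where sw: "similar_mat_wit A B P Q" using B(3) unfolding similar_mat_def by blast
  have c: "P \<in> carrier_mat n n" "Q \<in> carrier_mat n n" and PQ: "P * Q = 1\<^sub>m n" and QP: "Q * P = 1\<^sub>m n"
    and AB: "A = P * B * Q"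
    using sw A unfolding similar_mat_wit_def Let_def by auto
  have pw: "\<And>k. k > 0 \<Longrightarrow> A ^\<^sub>m k = P * B ^\<^sub>m k * Q"
    using sim_pow[OF A B(1) c QP AB] by auto
  have Bmc: "B ^\<^sub>m m \<in> carrier_mat n n" using B(1) by simp
  have "B ^\<^sub>m m = Q * (P * B ^\<^sub>m m * Q) * P"
    by (rule conj_cancel[symmetric, OF c Bmc QP])
  also have "P * B ^\<^sub>m m * Q = 1\<^sub>m n" using pw[OF m] Am by simp
  also have "Q * 1\<^sub>m n * P = 1\<^sub>m n" using c QP by (simp add: right_mult_one_mat)
  finally have Bm: "B ^\<^sub>m m = 1\<^sub>m n" .
  have diag: "\<And>i k. i < n \<Longrightarrow> (B ^\<^sub>m k) $$ (i, i) = B $$ (i, i) ^ k"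
    using upper_tri_pow[OF B(1,2)] by blast
  have root: "\<And>i. i < n \<Longrightarrow> B $$ (i, i) ^ m = 1" using diag[of _ m] Bm by simp
  have trB: "mat_trace A = mat_trace B" using AB trace_sim[OF B(1) c QP] by simp
  show ?thesis
  proof (cases "m = 1")
    case True
    then have "A = 1\<^sub>m n" using Am A by simp
    then show ?thesis unfolding mat_trace_def using True by simp
  next
    case False
    then have m1: "m - 1 > 0" using m by simp
    have "mat_trace (A ^\<^sub>m (m - 1)) = mat_trace (B ^\<^sub>m (m - 1))"
      using pw[OF m1] trace_sim[of "B ^\<^sub>m (m - 1)" n P Q] B(1) c QP by simp
    also have "\<dots> = (\<Sum>i<n. B $$ (i, i) ^ (m - 1))" unfolding mat_trace_def using B(1) diag by simp
    also have "\<dots> = (\<Sum>i<n. cnj (B $$ (i, i)))" using unit_root_cnj[OF root m] by simp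
    also have "\<dots> = cnj (mat_trace B)" unfolding mat_trace_def using B(1) by simp
    finally show ?thesis using trB by simp
  qed
qed

context group begin

lemma char_one: "is_rep G n \<rho> \<Longrightarrow> character_of G \<rho> \<one> = of_nat n"
  unfolding character_of_def mat_trace_def by (simp add: rep_one)

lemma char_inv_cnj:
  assumes irr: "irr_rep G n \<rho>" and fin: "finite (carrier G)" and g: "g \<in> carrier G"
  shows "character_of G \<rho> (inv g) = cnj (character_of G \<rho> g)"
proof -
  have rep: "is_rep G n \<rho>" using irr unfolding irr_rep_def by auto
  have o: "Coset.order G > 0" using fin order_gt_0_iff_finite by blast
  have "character_of G \<rho> (inv g) = mat_trace (\<rho> (inv g))" unfolding character_of_def using g by simp
  also have "\<dots> = mat_trace (\<rho> g ^\<^sub>m (Coset.order G - 1))" using rep_inv_pow[OF rep g fin] by simp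
  also have "\<dots> = cnj (mat_trace (\<rho> g))"
    by (rule trace_pow_pred_cnj[OF rep_carrier[OF rep g] rep_pow_order[OF rep g] o])
  also have "\<dots> = cnj (character_of G \<rho> g)" unfolding character_of_def using g by simp
  finally show ?thesis .
qed

lemma norm_sq_sum:
  assumes irr: "irr_rep G n \<rho>" and fin: "finite (carrier G)"
  shows "(\<Sum>g\<in>carrier G. (cmod (character_of G \<rho> g))^2) = real (Coset.order G)"
proof -
  have "complex_of_real (\<Sum>g\<in>carrier G. (cmod (character_of G \<rho> g))^2)
      = (\<Sum>g\<in>carrier G. character_of G \<rho> g * character_of G \<rho> (inv g))"
    by (simp add: char_inv_cnj[OF irr fin] complex_norm_square[symmetric])
  also have "\<dots> = of_nat (Coset.order G)" by (rule char_orthogonality[OF irr fin])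
  finally show ?thesis by (metis of_real_eq_iff of_real_of_nat_eq)
qed

lemma irr_in_Irr: "irr_rep G n \<rho> \<Longrightarrow> character_of G \<rho> \<in> Irr G"
  unfolding Irr_def by blast

lemma gvz_index:
  assumes gvz: "GVZ G" and irr: "irr_rep G n \<rho>" and fin: "finite (carrier G)"
  shows "real (card (char_center G (character_of G \<rho>))) * (real n)^2 = real (Coset.order G)"
proof -
  let ?\<chi> = "character_of G \<rho>"
  let ?Z = "char_center G ?\<chi>"
  have rep: "is_rep G n \<rho>" using irr unfolding irr_rep_def by auto
  have one: "cmod (?\<chi> \<one>) = real n" using char_one[OF rep] by simp
  have Zsub: "?Z \<subseteq> carrier G" unfolding char_center_def by auto
  have zero: "\<And>g. g \<in> carrier G - ?Z \<Longrightarrow> ?\<chi> g = 0"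
    using gvz irr_in_Irr[OF irr] unfolding GVZ_def by blast
  have "real (Coset.order G) = (\<Sum>g\<in>carrier G. (cmod (?\<chi> g))^2)" using norm_sq_sum[OF irr fin] by simp
  also have "\<dots> = (\<Sum>g\<in>?Z. (cmod (?\<chi> g))^2)"
    by (rule sum.mono_neutral_right[OF fin Zsub], insert zero, auto)
  also have "\<dots> = (\<Sum>g\<in>?Z. (real n)^2)"
    by (rule sum.cong[OF refl], unfold char_center_def, insert one, auto)
  also have "\<dots> = real (card ?Z) * (real n)^2" by simp
  finally show ?thesis by simp
qed

lemma commuting_in_center:
  assumes irr: "irr_rep G n \<rho>" and fin: "finite (carrier G)" and z: "z \<in> carrier G"
    and comm: "\<forall>g\<in>carrier G. \<rho> z * \<rho> g = \<rho> g * \<rho> z"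
  shows "z \<in> char_center G (character_of G \<rho>)"
proof -
  have rep: "is_rep G n \<rho>" using irr unfolding irr_rep_def by auto
  have n: "n > 0" using rep_pos[OF rep] .
  have o: "Coset.order G > 0" using fin order_gt_0_iff_finite by blast
  obtain c where c: "\<rho> z = c \<cdot>\<^sub>m 1\<^sub>m n"
    using schur_scalar[OF irr rep_carrier[OF rep z] comm] by blast
  have cc: "c \<cdot>\<^sub>m 1\<^sub>m n \<in> carrier_mat n n" by simp
  have ut: "upper_triangular (c \<cdot>\<^sub>m 1\<^sub>m n)" unfolding upper_triangular_def by auto
  have "((c \<cdot>\<^sub>m 1\<^sub>m n) ^\<^sub>m Coset.order G) $$ (0, 0) = c ^ Coset.order G"
    using upper_tri_pow[OF cc ut] n by simp
  moreover have "(c \<cdot>\<^sub>m 1\<^sub>m n) ^\<^sub>m Coset.order G = 1\<^sub>m n" using rep_pow_order[OF rep z] c by simp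
  ultimately have "c ^ Coset.order G = 1" using n by simp
  then have "cmod c ^ Coset.order G = 1" by (metis norm_one norm_power)
  then have cm: "cmod c = 1" using o power_eq_imp_eq_base[of "cmod c" "Coset.order G" 1] by simp
  have "character_of G \<rho> z = of_nat n * c" unfolding character_of_def mat_trace_def c using z by simp
  then have "cmod (character_of G \<rho> z) = real n" using cm by (simp add: norm_mult)
  then show ?thesis unfolding char_center_def using z char_one[OF rep] by simp
qed

end

lemma basis_split:
  fixes W :: "complex vec set"
  assumes Wsub: "W \<subseteq> carrier_vec n" and W0: "0\<^sub>v n \<in> W"
    and Wadd: "\<forall>v\<in>W. \<forall>w\<in>W. v + w \<in> W" and Wsm: "\<forall>c. \<forall>v\<in>W. c \<cdot>\<^sub>v v \<in> W"
    and ne: "W \<noteq> {0\<^sub>v n}" and nf: "W \<noteq> carrier_vec n"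
  shows "\<exists>k P Pi. 0 < k \<and> k < n \<and> P \<in> carrier_mat n n \<and> Pi \<in> carrier_mat n n
     \<and> P * Pi = 1\<^sub>m n \<and> Pi * P = 1\<^sub>m n \<and> (\<forall>j<k. col P j \<in> W)
     \<and> (\<forall>w\<in>W. \<forall>i. k \<le> i \<and> i < n \<longrightarrow> (Pi *\<^sub>v w) $ i = 0)"
proof -
  interpret V: vec_space "TYPE(complex)" n .
  have subW: "submodule class_ring W V.V"
    by (unfold_locales, insert Wsub W0 Wadd Wsm, auto)
  have fd: "V.fin_dim" by simp
  have bound: "\<And>S. S \<subseteq> carrier_vec n \<and> V.lin_indpt S \<Longrightarrow> finite S \<and> card S \<le> n"
    using V.li_le_dim[OF fd] V.dim_is_n by auto
  have li0: "V.lin_indpt {}"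
    by (metis (no_types) empty_subsetI V.fin_dim V.finite_basis_exists V.subset_li_is_li V.basis_def)
  obtain B where finB: "finite B" and maxB: "maximal B (\<lambda>S. S \<subseteq> W \<and> V.lin_indpt S)"
    using maximal_exists[of "\<lambda>S. S \<subseteq> W \<and> V.lin_indpt S" n "{}"] bound Wsub li0 by blast
  have BW: "B \<subseteq> W" and liB: "V.lin_indpt B" using maxB unfolding maximal_def by auto
  have BC: "B \<subseteq> carrier_vec n" using BW Wsub by auto
  have spanB: "V.span B = W"
  proof
    show "V.span B \<subseteq> W" using V.span_is_subset[OF BW subW] .
    show "W \<subseteq> V.span B"
    proof
      fix w assume w: "w \<in> W"
      show "w \<in> V.span B"
      proof (rule ccontr)
        assume nw: "w \<notin> V.span B"
        have wB: "w \<notin> B" using nw V.in_own_span[OF BC] by auto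
        have "V.lin_indpt (B \<union> {w})" using V.lin_dep_iff_in_span[OF _ liB _ wB] BC w Wsub nw by auto
        then have "B \<union> {w} = B" using maxB w BW unfolding maximal_def by blast
        then show False using wB by auto
      qed
    qed
  qed
  obtain C where finC: "finite C" and maxC: "maximal C (\<lambda>S. B \<subseteq> S \<and> S \<subseteq> carrier_vec n \<and> V.lin_indpt S)"
    using maximal_exists[of "\<lambda>S. B \<subseteq> S \<and> S \<subseteq> carrier_vec n \<and> V.lin_indpt S" n B] bound BC liB by blast
  have BsC: "B \<subseteq> C" and CC: "C \<subseteq> carrier_vec n" and liC: "V.lin_indpt C" using maxC unfolding maximal_def by auto
  have mC: "\<And>S. C \<subseteq> S \<Longrightarrow> S \<subseteq> carrier_vec n \<Longrightarrow> V.lin_indpt S \<Longrightarrow> S = C"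
    using maxC BsC unfolding maximal_def by blast
  have "maximal C (\<lambda>S. S \<subseteq> carrier_vec n \<and> V.lin_indpt S)"
    unfolding maximal_def
  proof (intro conjI allI impI)
    show "C \<subseteq> carrier_vec n" by (rule CC)
    show "V.lin_indpt C" by (rule liC)
    fix S assume "C \<subseteq> S \<and> S \<subseteq> carrier_vec n \<and> V.lin_indpt S"
    then show "S = C" using mC by blast
  qed
  then have basC: "V.basis C" by (rule V.max_li_is_basis)
  have cardC: "card C = n" using V.dim_basis[OF finC basC] V.dim_is_n by simp
  define k where "k = card B"
  have k0: "0 < k"
  proof (rule ccontr)
    assume "\<not> 0 < k"
    then have "B = {}" using finB unfolding k_def by auto
    then have "W = {0\<^sub>v n}" using spanB V.span_empty by simp
    then show False using ne by simp
  qed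
  have kn: "k < n"
  proof (rule ccontr)
    assume "\<not> k < n"
    then have "card B \<ge> V.dim" using V.dim_is_n unfolding k_def by simp
    then have "V.basis B" using V.dim_li_is_basis[OF fd finB _ liB] BC by simp
    then have "W = carrier_vec n" using spanB unfolding V.basis_def by simp
    then show False using nf by simp
  qed
  obtain bs where bs: "set bs = B" "distinct bs" using finite_distinct_list[OF finB] by blast
  obtain cs where cs: "set cs = C - B" "distinct cs" using finite_distinct_list[of "C - B"] finC by blast
  define vs where "vs = bs @ cs"
  have vs: "set vs = C" "distinct vs" using bs cs BsC unfolding vs_def by auto
  have lvs: "length vs = n" using distinct_card[OF vs(2)] vs(1) cardC by simp
  have lbs: "length bs = k" using distinct_card[OF bs(2)] bs(1) unfolding k_def by simp
  have vsC: "set vs \<subseteq> carrier_vec n" using vs CC by simp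
  define P where "P = mat_of_cols n vs"
  have P: "P \<in> carrier_mat n n" unfolding P_def using lvs by auto
  have colsP: "set (cols P) = C" unfolding P_def using vsC vs by simp
  have detP: "det P \<noteq> 0"
  proof
    assume "det P = 0"
    then obtain v where v: "v \<in> carrier_vec n" "v \<noteq> 0\<^sub>v n" "P *\<^sub>v v = 0\<^sub>v n"
      using det_0_iff_vec_prod_zero_field[OF P] by blast
    have dc: "distinct (cols P)" unfolding P_def using vsC vs by simp
    have "V.lin_dep (set (cols P))" by (rule V.lin_depI[OF P v dc])
    then show False using colsP liC by simp
  qed
  obtain Pi where Pi: "Pi \<in> carrier_mat n n" "Pi * P = 1\<^sub>m n" "P * Pi = 1\<^sub>m n"
    using det_non_zero_imp_unit[OF P detP, of undefined]
    unfolding Units_def ring_mat_def by auto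
  have colbs: "\<And>j. j < k \<Longrightarrow> col P j = bs ! j"
  proof -
    fix j assume j: "j < k"
    have jv: "j < length vs" using j lvs kn by simp
    have "col P j = vs ! j" unfolding P_def
      by (rule col_mat_of_cols[OF jv], insert nth_mem[OF jv] vsC, auto)
    also have "\<dots> = bs ! j" unfolding vs_def using j lbs by (simp add: nth_append)
    finally show "col P j = bs ! j" .
  qed
  have colW: "\<forall>j<k. col P j \<in> W"
    using colbs lbs bs BW by auto
  define U where "U = {w \<in> carrier_vec n. \<forall>i. k \<le> i \<and> i < n \<longrightarrow> (Pi *\<^sub>v w) $ i = 0}"
  have addU: "\<And>v w. v \<in> U \<Longrightarrow> w \<in> U \<Longrightarrow> v + w \<in> U"
  proof -
    fix v w assume v: "v \<in> U" and w: "w \<in> U"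
    have vc: "v \<in> carrier_vec n" and wc: "w \<in> carrier_vec n" using v w unfolding U_def by auto
    have e: "Pi *\<^sub>v (v + w) = Pi *\<^sub>v v + Pi *\<^sub>v w" using mult_add_distrib_mat_vec[OF Pi(1) vc wc] .
    show "v + w \<in> U" unfolding U_def
    proof (intro CollectI conjI allI impI)
      show "v + w \<in> carrier_vec n" using vc wc by simp
      fix i assume i: "k \<le> i \<and> i < n"
      then have "(Pi *\<^sub>v v) $ i = 0" "(Pi *\<^sub>v w) $ i = 0" using v w unfolding U_def by auto
      moreover have "(Pi *\<^sub>v (v + w)) $ i = (Pi *\<^sub>v v) $ i + (Pi *\<^sub>v w) $ i"
        unfolding e using i Pi(1) by (simp del: index_mult_mat_vec)
      ultimately show "(Pi *\<^sub>v (v + w)) $ i = 0" by simp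
    qed
  qed
  have smU: "\<And>c v. v \<in> U \<Longrightarrow> c \<cdot>\<^sub>v v \<in> U"
  proof -
    fix c v assume v: "v \<in> U"
    have vc: "v \<in> carrier_vec n" using v unfolding U_def by auto
    have e: "Pi *\<^sub>v (c \<cdot>\<^sub>v v) = c \<cdot>\<^sub>v (Pi *\<^sub>v v)" using mult_mat_vec[OF Pi(1) vc] .
    show "c \<cdot>\<^sub>v v \<in> U" unfolding U_def
    proof (intro CollectI conjI allI impI)
      show "c \<cdot>\<^sub>v v \<in> carrier_vec n" using vc by simp
      fix i assume i: "k \<le> i \<and> i < n"
      then have "(Pi *\<^sub>v v) $ i = 0" using v unfolding U_def by auto
      moreover have "(Pi *\<^sub>v (c \<cdot>\<^sub>v v)) $ i = c * (Pi *\<^sub>v v) $ i"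
        unfolding e using i Pi(1) by (simp del: index_mult_mat_vec)
      ultimately show "(Pi *\<^sub>v (c \<cdot>\<^sub>v v)) $ i = 0" by simp
    qed
  qed
  have zU: "0\<^sub>v n \<in> U" unfolding U_def using Pi(1) by auto
  have subU: "submodule class_ring U V.V"
    by (unfold_locales, insert addU smU zU, auto simp: U_def)
  have BU: "B \<subseteq> U"
  proof
    fix b assume b: "b \<in> B"
    then obtain j where j: "j < k" "b = bs ! j" using bs lbs by (metis in_set_conv_nth)
    have "b = col P j" using colbs j by simp
    then have "Pi *\<^sub>v b = col (Pi * P) j" using col_mult2[OF Pi(1) P, of j] j kn by simp
    also have "\<dots> = unit_vec n j" using Pi j kn by simp
    finally show "b \<in> U" unfolding U_def using b BC j by auto
  qed
  have "W \<subseteq> U" using V.span_is_subset[OF BU subU] spanB by simp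
  then have "\<forall>w\<in>W. \<forall>i. k \<le> i \<and> i < n \<longrightarrow> (Pi *\<^sub>v w) $ i = 0" unfolding U_def by auto
  then show ?thesis using k0 kn P Pi colW by blast
qed

lemma sum_split_nat:
  fixes k n :: nat
  assumes "k \<le> n"
  shows "(\<Sum>q<n. f q) = (\<Sum>q<k. f q) + (\<Sum>q<n-k. f (q + k))"
proof -
  have "(\<Sum>q<n. f q) = (\<Sum>q\<in>{0..<k}. f q) + (\<Sum>q\<in>{k..<n}. f q)"
    using sum.atLeastLessThan_concat[of 0 k n f] assms by (simp add: lessThan_atLeast0)
  also have "(\<Sum>q\<in>{k..<n}. f q) = (\<Sum>q\<in>{0..<n-k}. f (q + k))"
    using sum.shift_bounds_nat_ivl[of f 0 k "n-k"] assms by simp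
  finally show ?thesis by (simp add: lessThan_atLeast0)
qed

lemma unipotent_finite_order:
  fixes U :: "complex mat"
  assumes U: "U \<in> carrier_mat n n"
    and sq: "(U - 1\<^sub>m n) * (U - 1\<^sub>m n) = 0\<^sub>m n n"
    and pw: "U ^\<^sub>m m = 1\<^sub>m n" and m: "m > 0"
  shows "U = 1\<^sub>m n"
proof -
  define Xm where "Xm = U - 1\<^sub>m n"
  have Xc: "Xm \<in> carrier_mat n n" unfolding Xm_def by (rule minus_carrier_mat, simp)
  have UX: "U = 1\<^sub>m n + Xm" unfolding Xm_def using U by (intro eq_matI, auto)
  have XX: "Xm * Xm = 0\<^sub>m n n" using sq unfolding Xm_def .
  have ind: "U ^\<^sub>m j = 1\<^sub>m n + of_nat j \<cdot>\<^sub>m Xm" for j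
  proof (induction j)
    case 0 then show ?case using Xc U by (intro eq_matI, auto)
  next
    case (Suc j)
    have "U ^\<^sub>m Suc j = (1\<^sub>m n + of_nat j \<cdot>\<^sub>m Xm) * (1\<^sub>m n + Xm)" using Suc UX by simp
    also have "\<dots> = (1\<^sub>m n + of_nat j \<cdot>\<^sub>m Xm) * 1\<^sub>m n + (1\<^sub>m n + of_nat j \<cdot>\<^sub>m Xm) * Xm"
      by (rule mult_add_distrib_mat[of _ n n], insert Xc, auto)
    also have "(1\<^sub>m n + of_nat j \<cdot>\<^sub>m Xm) * 1\<^sub>m n = 1\<^sub>m n + of_nat j \<cdot>\<^sub>m Xm" using Xc by simp
    also have "(1\<^sub>m n + of_nat j \<cdot>\<^sub>m Xm) * Xm = 1\<^sub>m n * Xm + (of_nat j \<cdot>\<^sub>m Xm) * Xm"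
      by (rule add_mult_distrib_mat[of _ n n], insert Xc, auto)
    also have "(of_nat j \<cdot>\<^sub>m Xm) * Xm = of_nat j \<cdot>\<^sub>m (Xm * Xm)" by (rule mult_smult_assoc_mat[OF Xc Xc])
    also have "\<dots> = 0\<^sub>m n n" using XX by simp
    also have "1\<^sub>m n * Xm = Xm" using Xc by simp
    finally have "U ^\<^sub>m Suc j = 1\<^sub>m n + of_nat j \<cdot>\<^sub>m Xm + (Xm + 0\<^sub>m n n)" .
    also have "\<dots> = 1\<^sub>m n + of_nat (Suc j) \<cdot>\<^sub>m Xm"
      by (rule eq_matI, insert Xc, auto simp: algebra_simps)
    finally show ?case .
  qed
  have "1\<^sub>m n + of_nat m \<cdot>\<^sub>m Xm = 1\<^sub>m n" using ind[of m] pw by simp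
  then have X0: "Xm = 0\<^sub>m n n"
  proof -
    assume e: "1\<^sub>m n + of_nat m \<cdot>\<^sub>m Xm = 1\<^sub>m n"
    show "Xm = 0\<^sub>m n n"
    proof (rule eq_matI)
      fix i j assume i: "i < dim_row (0\<^sub>m n n :: complex mat)" and j: "j < dim_col (0\<^sub>m n n :: complex mat)"
      have "(1\<^sub>m n + of_nat m \<cdot>\<^sub>m Xm) $$ (i, j) = (1\<^sub>m n :: complex mat) $$ (i, j)" using e by simp
      then have "of_nat m * Xm $$ (i, j) = 0" using i j Xc by simp
      then show "Xm $$ (i, j) = 0\<^sub>m n n $$ (i, j)" using m i j by simp
    qed (insert Xc, auto)
  qed
  show ?thesis using UX X0 by simp
qed

context group begin

lemma rep_comm_imp_kernel:
  assumes "is_rep G n \<rho>" "a \<in> carrier G" "b \<in> carrier G"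
    and c: "\<rho> a * \<rho> b = \<rho> b * \<rho> a"
  shows "\<rho> (a \<otimes> b \<otimes> inv a \<otimes> inv b) = 1\<^sub>m n"
proof -
  have e1: "a \<otimes> b \<otimes> inv a \<otimes> inv b = (a \<otimes> b) \<otimes> (inv a \<otimes> inv b)" using assms(2,3) by (simp add: m_assoc)
  have e2: "(b \<otimes> a) \<otimes> (inv a \<otimes> inv b) = \<one>" using assms(2,3)
    by (simp add: m_assoc flip: m_assoc[of a "inv a" "inv b"])
  have "\<rho> (a \<otimes> b) = \<rho> (b \<otimes> a)" using rep_mult[OF assms(1)] assms(2,3) c by simp
  then have "\<rho> ((a \<otimes> b) \<otimes> (inv a \<otimes> inv b)) = \<rho> ((b \<otimes> a) \<otimes> (inv a \<otimes> inv b))"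
    using rep_mult[OF assms(1)] assms(2,3) by simp
  then show ?thesis unfolding e1 e2 using rep_one[OF assms(1)] by simp
qed

end

context group begin

lemma reps_commute_if_no_nonlinear:
  assumes fin: "finite (carrier G)"
    and noirr: "\<forall>n \<rho>. irr_rep G n \<rho> \<and> (\<forall>h\<in>N. \<rho> h = 1\<^sub>m n) \<longrightarrow> n = 1"
  shows "is_rep G n \<sigma> \<Longrightarrow> (\<forall>h\<in>N. \<sigma> h = 1\<^sub>m n) \<Longrightarrow> a \<in> carrier G \<Longrightarrow> b \<in> carrier G
    \<Longrightarrow> \<sigma> a * \<sigma> b = \<sigma> b * \<sigma> a"
proof (induction n arbitrary: \<sigma> a b rule: less_induct)
  case (less n \<sigma> a b)
  have rep: "is_rep G n \<sigma>" and ker: "\<forall>h\<in>N. \<sigma> h = 1\<^sub>m n" and a: "a \<in> carrier G" and b: "b \<in> carrier G"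
    using less.prems by auto
  note sc = rep_carrier[OF rep]
  show ?case
  proof (cases "irr_rep G n \<sigma>")
    case True
    then have n1: "n = 1" using noirr ker by blast
    have ca: "\<sigma> a \<in> carrier_mat 1 1" and cb: "\<sigma> b \<in> carrier_mat 1 1" using sc a b n1 by auto
    show ?thesis
    proof (rule eq_matI)
      fix i j assume i: "i < dim_row (\<sigma> b * \<sigma> a)" and j: "j < dim_col (\<sigma> b * \<sigma> a)"
      then have i0: "i = 0" and j0: "j = 0" using ca cb by auto
      show "(\<sigma> a * \<sigma> b) $$ (i, j) = (\<sigma> b * \<sigma> a) $$ (i, j)"
        unfolding i0 j0 using mult_mat_entry[OF ca cb, of 0 0] mult_mat_entry[OF cb ca, of 0 0] by simp
    qed (insert ca cb, auto)
  next
    case False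
    then obtain W where inv: "invariant_subspace G n \<sigma> W" and W: "W \<noteq> {0\<^sub>v n}" "W \<noteq> carrier_vec n"
      using rep unfolding irr_rep_def by blast
    have Wsub: "W \<subseteq> carrier_vec n" and W0: "0\<^sub>v n \<in> W" and Wadd: "\<forall>v\<in>W. \<forall>w\<in>W. v + w \<in> W"
      and Wsm: "\<forall>c. \<forall>v\<in>W. c \<cdot>\<^sub>v v \<in> W" and Winv: "\<forall>g\<in>carrier G. \<forall>v\<in>W. \<sigma> g *\<^sub>v v \<in> W"
      using inv unfolding invariant_subspace_def by auto
    obtain k P Pi where k: "0 < k" "k < n" and P: "P \<in> carrier_mat n n" and Pi: "Pi \<in> carrier_mat n n"
      and PPi: "P * Pi = 1\<^sub>m n" and PiP: "Pi * P = 1\<^sub>m n" and colW: "\<forall>j<k. col P j \<in> W"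
      and PiW: "\<forall>w\<in>W. \<forall>i. k \<le> i \<and> i < n \<longrightarrow> (Pi *\<^sub>v w) $ i = 0"
      using basis_split[OF Wsub W0 Wadd Wsm W] by blast
    define \<tau> where "\<tau> = (\<lambda>g. Pi * \<sigma> g * P)"
    have tc: "\<And>g. g \<in> carrier G \<Longrightarrow> \<tau> g \<in> carrier_mat n n" unfolding \<tau>_def using sc P Pi by auto
    have trep: "is_rep G n \<tau>"
      unfolding is_rep_def
    proof (intro conjI ballI)
      show "0 < n" using k by simp
      fix g assume g: "g \<in> carrier G"
      show "\<tau> g \<in> carrier_mat n n" using tc[OF g] .
    next
      show "\<tau> \<one> = 1\<^sub>m n" unfolding \<tau>_def using rep_one[OF rep] P Pi PiP by simp
    next
      fix g h assume g: "g \<in> carrier G" and h: "h \<in> carrier G"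
      show "\<tau> (g \<otimes> h) = \<tau> g * \<tau> h" unfolding \<tau>_def
        using conj_mult[OF Pi P sc[OF g] sc[OF h] PPi] rep_mult[OF rep g h] by simp
    qed
    have tN: "\<forall>h\<in>N. \<tau> h = 1\<^sub>m n" unfolding \<tau>_def using ker P Pi PiP by simp
    have zb: "\<And>g i j. g \<in> carrier G \<Longrightarrow> i < n \<Longrightarrow> k \<le> i \<Longrightarrow> j < k \<Longrightarrow> \<tau> g $$ (i, j) = 0"
    proof -
      fix g i j assume g: "g \<in> carrier G" and i: "i < n" "k \<le> i" and j: "j < k"
      have jn: "j < n" using j k by simp
      have PiS: "Pi * \<sigma> g \<in> carrier_mat n n" using Pi sc[OF g] by simp
      have colP: "col P j \<in> carrier_vec n" using P jn by simp
      have "col (\<tau> g) j = (Pi * \<sigma> g) *\<^sub>v col P j" unfolding \<tau>_def using col_mult2[OF PiS P jn] .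
      also have "\<dots> = Pi *\<^sub>v (\<sigma> g *\<^sub>v col P j)" using Pi sc[OF g] colP by simp
      finally have e: "col (\<tau> g) j = Pi *\<^sub>v (\<sigma> g *\<^sub>v col P j)" .
      have "\<sigma> g *\<^sub>v col P j \<in> W" using Winv g colW j by blast
      then have "(Pi *\<^sub>v (\<sigma> g *\<^sub>v col P j)) $ i = 0" using PiW i by blast
      then have "col (\<tau> g) j $ i = 0" unfolding e .
      then show "\<tau> g $$ (i, j) = 0" using tc[OF g] i jn by simp
    qed
    define A where "A = (\<lambda>g. mat k k (\<lambda>(i, j). \<tau> g $$ (i, j)))"
    define D where "D = (\<lambda>g. mat (n - k) (n - k) (\<lambda>(i, j). \<tau> g $$ (i + k, j + k)))"
    have Arep: "is_rep G k A"
      unfolding is_rep_def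
    proof (intro conjI ballI)
      show "0 < k" by (rule k(1))
      fix g assume g: "g \<in> carrier G"
      show "A g \<in> carrier_mat k k" unfolding A_def by simp
    next
      show "A \<one> = 1\<^sub>m k" unfolding A_def using rep_one[OF trep] k by (intro eq_matI, auto)
    next
      fix g h assume g: "g \<in> carrier G" and h: "h \<in> carrier G"
      show "A (g \<otimes> h) = A g * A h"
      proof (rule eq_matI)
        fix i j assume i: "i < dim_row (A g * A h)" and j: "j < dim_col (A g * A h)"
        then have i: "i < k" and j: "j < k" unfolding A_def by auto
        have ikn: "i < n" "j < n" using i j k by auto
        have "A (g \<otimes> h) $$ (i, j) = (\<tau> g * \<tau> h) $$ (i, j)"
          unfolding A_def using rep_mult[OF trep g h] i j by simp
        also have "\<dots> = (\<Sum>q<n. \<tau> g $$ (i, q) * \<tau> h $$ (q, j))"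
          by (rule mult_mat_entry[OF tc[OF g] tc[OF h] ikn])
        also have "\<dots> = (\<Sum>q<k. \<tau> g $$ (i, q) * \<tau> h $$ (q, j)) + (\<Sum>q<n-k. \<tau> g $$ (i, q + k) * \<tau> h $$ (q + k, j))"
          by (rule sum_split_nat, insert k, simp)
        also have "(\<Sum>q<n-k. \<tau> g $$ (i, q + k) * \<tau> h $$ (q + k, j)) = 0"
          using zb[OF h _ _ j] by (intro sum.neutral, auto)
        also have "(\<Sum>q<k. \<tau> g $$ (i, q) * \<tau> h $$ (q, j)) = (\<Sum>q<k. A g $$ (i, q) * A h $$ (q, j))"
          unfolding A_def using i j by (intro sum.cong, auto)
        also have "\<dots> = (A g * A h) $$ (i, j)"
          by (rule mult_mat_entry[symmetric], unfold A_def, insert i j, auto)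
        finally show "A (g \<otimes> h) $$ (i, j) = (A g * A h) $$ (i, j)" by simp
      qed (unfold A_def, auto)
    qed
    have Drep: "is_rep G (n - k) D"
      unfolding is_rep_def
    proof (intro conjI ballI)
      show "0 < n - k" using k by simp
      fix g assume g: "g \<in> carrier G"
      show "D g \<in> carrier_mat (n - k) (n - k)" unfolding D_def by simp
    next
      show "D \<one> = 1\<^sub>m (n - k)" unfolding D_def using rep_one[OF trep] k by (intro eq_matI, auto)
    next
      fix g h assume g: "g \<in> carrier G" and h: "h \<in> carrier G"
      show "D (g \<otimes> h) = D g * D h"
      proof (rule eq_matI)
        fix i j assume i: "i < dim_row (D g * D h)" and j: "j < dim_col (D g * D h)"
        then have i: "i < n - k" and j: "j < n - k" unfolding D_def by auto
        have ikn: "i + k < n" "j + k < n" using i j k by auto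
        have "D (g \<otimes> h) $$ (i, j) = (\<tau> g * \<tau> h) $$ (i + k, j + k)"
          unfolding D_def using rep_mult[OF trep g h] i j by simp
        also have "\<dots> = (\<Sum>q<n. \<tau> g $$ (i + k, q) * \<tau> h $$ (q, j + k))"
          by (rule mult_mat_entry[OF tc[OF g] tc[OF h] ikn])
        also have "\<dots> = (\<Sum>q<k. \<tau> g $$ (i + k, q) * \<tau> h $$ (q, j + k)) + (\<Sum>q<n-k. \<tau> g $$ (i + k, q + k) * \<tau> h $$ (q + k, j + k))"
          by (rule sum_split_nat, insert k, simp)
        also have "(\<Sum>q<k. \<tau> g $$ (i + k, q) * \<tau> h $$ (q, j + k)) = 0"
          using zb[OF g ikn(1)] by (intro sum.neutral, auto)
        also have "(\<Sum>q<n-k. \<tau> g $$ (i + k, q + k) * \<tau> h $$ (q + k, j + k)) = (\<Sum>q<n-k. D g $$ (i, q) * D h $$ (q, j))"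
          unfolding D_def using i j by (intro sum.cong, auto)
        also have "\<dots> = (D g * D h) $$ (i, j)"
          by (rule mult_mat_entry[symmetric], unfold D_def, insert i j, auto)
        finally show "D (g \<otimes> h) $$ (i, j) = (D g * D h) $$ (i, j)" by simp
      qed (unfold D_def, auto)
    qed
    have AN: "\<forall>h\<in>N. A h = 1\<^sub>m k" unfolding A_def using tN k by (auto intro!: eq_matI)
    have DN: "\<forall>h\<in>N. D h = 1\<^sub>m (n - k)" unfolding D_def using tN k by (auto intro!: eq_matI)
    have Acomm: "A a * A b = A b * A a" using less.IH[OF k(2) Arep AN a b] .
    have Dcomm: "D a * D b = D b * D a" using less.IH[of "n - k", OF _ Drep DN a b] k by simp
    define c where "c = a \<otimes> b \<otimes> inv a \<otimes> inv b"
    have c: "c \<in> carrier G" unfolding c_def using a b by simp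
    have Ac: "A c = 1\<^sub>m k" unfolding c_def by (rule rep_comm_imp_kernel[OF Arep a b Acomm])
    have Dc: "D c = 1\<^sub>m (n - k)" unfolding c_def by (rule rep_comm_imp_kernel[OF Drep a b Dcomm])
    define U where "U = \<tau> c"
    have Uc: "U \<in> carrier_mat n n" unfolding U_def using tc[OF c] .
    have e1: "\<And>i j. i < k \<Longrightarrow> j < k \<Longrightarrow> U $$ (i, j) = (if i = j then 1 else 0)"
    proof -
      fix i j assume "i < k" "j < k"
      then have "A c $$ (i, j) = U $$ (i, j)" unfolding A_def U_def by simp
      then show "U $$ (i, j) = (if i = j then 1 else 0)" using Ac \<open>i < k\<close> \<open>j < k\<close> by simp
    qed
    have e2: "\<And>i j. k \<le> i \<Longrightarrow> i < n \<Longrightarrow> k \<le> j \<Longrightarrow> j < n \<Longrightarrow> U $$ (i, j) = (if i = j then 1 else 0)"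
    proof -
      fix i j assume ij: "k \<le> i" "i < n" "k \<le> j" "j < n"
      then have "D c $$ (i - k, j - k) = U $$ (i, j)" unfolding D_def U_def by simp
      then have "(if i - k = j - k then 1 else 0) = U $$ (i, j)" using Dc ij by simp
      moreover have "(i - k = j - k) = (i = j)" using ij by arith
      ultimately show "U $$ (i, j) = (if i = j then 1 else 0)" by simp
    qed
    have e3: "\<And>i j. k \<le> i \<Longrightarrow> i < n \<Longrightarrow> j < k \<Longrightarrow> U $$ (i, j) = 0"
      unfolding U_def using zb[OF c] by blast
    have Um: "U - 1\<^sub>m n \<in> carrier_mat n n" by (rule minus_carrier_mat, simp)
    have sq: "(U - 1\<^sub>m n) * (U - 1\<^sub>m n) = 0\<^sub>m n n"
    proof (rule eq_matI)
      fix i j assume i: "i < dim_row (0\<^sub>m n n :: complex mat)" and j: "j < dim_col (0\<^sub>m n n :: complex mat)"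
      then have i: "i < n" and j: "j < n" by auto
      have "((U - 1\<^sub>m n) * (U - 1\<^sub>m n)) $$ (i, j) = (\<Sum>q<n. (U - 1\<^sub>m n) $$ (i, q) * (U - 1\<^sub>m n) $$ (q, j))"
        by (rule mult_mat_entry[OF Um Um i j])
      also have "\<dots> = 0"
      proof (rule sum.neutral, intro ballI)
        fix q assume q: "q \<in> {..<n}"
        show "(U - 1\<^sub>m n) $$ (i, q) * (U - 1\<^sub>m n) $$ (q, j) = 0"
        proof (cases "q < k")
          case True
          have "(U - 1\<^sub>m n) $$ (i, q) = 0"
          proof (cases "i < k")
            case True then show ?thesis using e1[of i q] \<open>q < k\<close> i q Uc by auto
          next
            case False then show ?thesis using e3[of i q] \<open>q < k\<close> i q Uc by auto
          qed
          then show ?thesis by simp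
        next
          case False
          have "(U - 1\<^sub>m n) $$ (q, j) = 0"
          proof (cases "j < k")
            case True then show ?thesis using e3[of q j] \<open>\<not> q < k\<close> j q Uc by auto
          next
            case False then show ?thesis using e2[of q j] \<open>\<not> q < k\<close> j q Uc by auto
          qed
          then show ?thesis by simp
        qed
      qed
      finally show "((U - 1\<^sub>m n) * (U - 1\<^sub>m n)) $$ (i, j) = (0\<^sub>m n n :: complex mat) $$ (i, j)" using i j by simp
    qed (insert Um, auto)
    have o: "Coset.order G > 0" using fin order_gt_0_iff_finite by blast
    have U1: "U = 1\<^sub>m n"
      by (rule unipotent_finite_order[OF Uc sq _ o], unfold U_def, rule rep_pow_order[OF trep c])
    have "\<sigma> c = P * (Pi * \<sigma> c * P) * Pi" by (rule conj_cancel[symmetric, OF Pi P sc[OF c] PPi])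
    also have "Pi * \<sigma> c * P = 1\<^sub>m n" using U1 unfolding U_def \<tau>_def .
    also have "P * 1\<^sub>m n * Pi = 1\<^sub>m n" using P PPi by simp
    finally have "\<sigma> c = 1\<^sub>m n" .
    then show ?thesis using rep_commute_from_kernel[OF rep a b] unfolding c_def by simp
  qed
qed

end

context group begin

lemma coset_eq_iff:
  assumes N: "subgroup N G" and x: "x \<in> carrier G" and y: "y \<in> carrier G"
  shows "(N #> x = N #> y) = (x \<otimes> inv y \<in> N)"
proof
  assume e: "N #> x = N #> y"
  have "x \<in> N #> y" using rcos_self[OF x N] e by simp
  then show "x \<otimes> inv y \<in> N" using subgroup.rcos_module_imp[OF N is_group y] by blast
next
  assume h: "x \<otimes> inv y \<in> N"
  have "x = (x \<otimes> inv y) \<otimes> y" using x y by (simp add: m_assoc)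
  then have "x \<in> N #> y" using h unfolding r_coset_def by blast
  then show "N #> x = N #> y" using repr_independence[OF _ y N] by simp
qed

lemma rcosets_elem:
  assumes N: "subgroup N G" and C: "C \<in> rcosets N"
  obtains x where "x \<in> carrier G" "C = N #> x"
  using C unfolding RCOSETS_def by blast

lemma exists_nonlinear_irr:
  assumes fin: "finite (carrier G)" and nN: "N \<lhd> G" and nd: "\<not> derived G (carrier G) \<subseteq> N"
  shows "\<exists>n \<rho>. irr_rep G n \<rho> \<and> (\<forall>h\<in>N. \<rho> h = 1\<^sub>m n) \<and> n \<noteq> 1"
proof (rule ccontr)
  assume "\<not> ?thesis"
  then have noirr: "\<forall>n \<rho>. irr_rep G n \<rho> \<and> (\<forall>h\<in>N. \<rho> h = 1\<^sub>m n) \<longrightarrow> n = 1" by blast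
  have sN: "subgroup N G" using normal_imp_subgroup[OF nN] .
  have Nsub: "N \<subseteq> carrier G" using subgroup.subset[OF sN] .
  obtain a b where a: "a \<in> carrier G" and b: "b \<in> carrier G" and ab: "a \<otimes> b \<otimes> inv a \<otimes> inv b \<notin> N"
  proof -
    { assume all: "\<forall>a\<in>carrier G. \<forall>b\<in>carrier G. a \<otimes> b \<otimes> inv a \<otimes> inv b \<in> N"
      have "derived_set G (carrier G) \<subseteq> N" using all by blast
      then have "derived G (carrier G) \<subseteq> N" unfolding derived_def
        using generate_subgroup_incl[OF _ sN] by blast
      then have False using nd by simp }
    then show ?thesis using that by blast
  qed
  have finR: "finite (rcosets N)"
  proof -
    have "rcosets N \<subseteq> Pow (carrier G)" unfolding RCOSETS_def r_coset_def using Nsub by auto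
    then show ?thesis using fin by (meson finite_Pow_iff finite_subset)
  qed
  obtain cs where cs: "set cs = rcosets N" "distinct cs" using finite_distinct_list[OF finR] by blast
  define m where "m = length cs"
  have csR: "\<And>i. i < m \<Longrightarrow> cs ! i \<in> rcosets N" using cs unfolding m_def by auto
  have NR: "N \<in> rcosets N" using rcosetsI[OF Nsub one_closed] Nsub by simp
  obtain i0 where i0: "i0 < m" "cs ! i0 = N" using NR cs unfolding m_def by (metis in_set_conv_nth)
  have idx: "\<And>C. C \<in> rcosets N \<Longrightarrow> \<exists>j<m. cs ! j = C" using cs unfolding m_def by (metis in_set_conv_nth)
  have inj: "\<And>i j. i < m \<Longrightarrow> j < m \<Longrightarrow> (cs ! i = cs ! j) = (i = j)"
    using cs(2) unfolding m_def by (simp add: nth_eq_iff_index_eq)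
  have mult_R: "\<And>C g. C \<in> rcosets N \<Longrightarrow> g \<in> carrier G \<Longrightarrow> C #> g \<in> rcosets N"
  proof -
    fix C g assume C: "C \<in> rcosets N" and g: "g \<in> carrier G"
    obtain x where x: "x \<in> carrier G" "C = N #> x" using rcosets_elem[OF sN C] by blast
    have "C #> g = N #> (x \<otimes> g)" using coset_mult_assoc[OF Nsub x(1) g] x by simp
    then show "C #> g \<in> rcosets N" using rcosetsI[OF Nsub] x g by simp
  qed
  have Rsub: "\<And>C. C \<in> rcosets N \<Longrightarrow> C \<subseteq> carrier G"
  proof -
    fix C assume "C \<in> rcosets N"
    then show "C \<subseteq> carrier G" unfolding RCOSETS_def r_coset_def using Nsub by auto
  qed
  define R where "R = (\<lambda>g. mat m m (\<lambda>(i, j). if cs ! i #> g = cs ! j then 1 else (0::complex)))"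
  have Rrep: "is_rep G m R"
    unfolding is_rep_def
  proof (intro conjI ballI)
    show "0 < m" using i0 by simp
    fix g assume "g \<in> carrier G"
    show "R g \<in> carrier_mat m m" unfolding R_def by simp
  next
    show "R \<one> = 1\<^sub>m m" unfolding R_def
      by (rule eq_matI, insert Rsub csR inj, auto)
  next
    fix g h assume g: "g \<in> carrier G" and h: "h \<in> carrier G"
    show "R (g \<otimes> h) = R g * R h"
    proof (rule eq_matI)
      fix i l assume i: "i < dim_row (R g * R h)" and l: "l < dim_col (R g * R h)"
      then have i: "i < m" and l: "l < m" unfolding R_def by auto
      obtain j0 where j0: "j0 < m" "cs ! j0 = cs ! i #> g" using idx[OF mult_R[OF csR[OF i] g]] by blast
      have "(R g * R h) $$ (i, l) = (\<Sum>j<m. R g $$ (i, j) * R h $$ (j, l))"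
        by (rule mult_mat_entry, unfold R_def, insert i l, auto)
      also have "\<dots> = (\<Sum>j<m. if j = j0 then (if cs ! j0 #> h = cs ! l then 1 else 0) else 0)"
      proof (rule sum.cong[OF refl])
        fix j assume j: "j \<in> {..<m}"
        have "(cs ! i #> g = cs ! j) = (j = j0)" using j0 inj[of j j0] j by auto
        then show "R g $$ (i, j) * R h $$ (j, l) = (if j = j0 then (if cs ! j0 #> h = cs ! l then 1 else 0) else 0)"
          unfolding R_def using i j l by auto
      qed
      also have "\<dots> = (if cs ! j0 #> h = cs ! l then 1 else 0)" using j0 by simp
      also have "cs ! j0 #> h = cs ! i #> (g \<otimes> h)" using j0 coset_mult_assoc[OF Rsub[OF csR[OF i]] g h] by simp
      finally show "R (g \<otimes> h) $$ (i, l) = (R g * R h) $$ (i, l)" unfolding R_def using i l by simp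
    qed (unfold R_def, auto)
  qed
  have Rker: "\<forall>h\<in>N. R h = 1\<^sub>m m"
  proof
    fix h assume h: "h \<in> N"
    have hc: "h \<in> carrier G" using h Nsub by auto
    have fix_c: "\<And>i. i < m \<Longrightarrow> cs ! i #> h = cs ! i"
    proof -
      fix i assume i: "i < m"
      obtain x where x: "x \<in> carrier G" "cs ! i = N #> x" using rcosets_elem[OF sN csR[OF i]] by blast
      have "cs ! i #> h = N #> (x \<otimes> h)" using coset_mult_assoc[OF Nsub x(1) hc] x by simp
      also have "\<dots> = N #> x"
      proof -
        have "x \<otimes> h \<otimes> inv x \<in> N" using normal.inv_op_closed2[OF nN x(1) h] .
        then show ?thesis using coset_eq_iff[OF sN _ x(1), of "x \<otimes> h"] x hc by simp
      qed
      finally show "cs ! i #> h = cs ! i" using x by simp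
    qed
    show "R h = 1\<^sub>m m" unfolding R_def by (rule eq_matI, insert fix_c inj, auto)
  qed
  have comm: "R a * R b = R b * R a"
    by (rule reps_commute_if_no_nonlinear[OF fin noirr Rrep Rker a b])
  have eqR: "R (a \<otimes> b) = R (b \<otimes> a)" using comm rep_mult[OF Rrep] a b by simp
  obtain l0 where l0: "l0 < m" "cs ! l0 = N #> (a \<otimes> b)"
    using idx[OF rcosetsI[OF Nsub, of "a \<otimes> b"]] a b by auto
  have r1: "R (a \<otimes> b) $$ (i0, l0) = 1" unfolding R_def using i0 l0 by simp
  have r2: "R (b \<otimes> a) $$ (i0, l0) = (if N #> (b \<otimes> a) = N #> (a \<otimes> b) then 1 else 0)"
    unfolding R_def using i0 l0 by simp
  have "N #> (b \<otimes> a) = N #> (a \<otimes> b)"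
  proof (rule ccontr)
    assume "N #> (b \<otimes> a) \<noteq> N #> (a \<otimes> b)"
    then have "R (b \<otimes> a) $$ (i0, l0) = 0" using r2 by simp
    then show False using r1 eqR by simp
  qed
  then have "N #> (a \<otimes> b) = N #> (b \<otimes> a)" by simp
  then have "(a \<otimes> b) \<otimes> inv (b \<otimes> a) \<in> N" using coset_eq_iff[OF sN, of "a \<otimes> b" "b \<otimes> a"] a b by simp
  moreover have "(a \<otimes> b) \<otimes> inv (b \<otimes> a) = a \<otimes> b \<otimes> inv a \<otimes> inv b" using a b by (simp add: inv_mult_group m_assoc)
  ultimately show False using ab by simp
qed

end

lemma triv_irr:
  assumes "group G"
  shows "irr_rep G 1 (\<lambda>g. 1\<^sub>m 1)"
  unfolding irr_rep_def
proof (intro conjI allI impI)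
  show "is_rep G 1 (\<lambda>g. 1\<^sub>m 1)" unfolding is_rep_def by simp
  fix W assume W: "invariant_subspace G 1 (\<lambda>g. 1\<^sub>m 1) W"
  have Wsub: "W \<subseteq> carrier_vec 1" and Wsm: "\<forall>c. \<forall>v\<in>W. c \<cdot>\<^sub>v v \<in> W"
    using W unfolding invariant_subspace_def by auto
  show "W = {0\<^sub>v 1} \<or> W = carrier_vec 1"
  proof (cases "W \<subseteq> {0\<^sub>v 1}")
    case True
    then show ?thesis using W unfolding invariant_subspace_def by auto
  next
    case False
    then obtain w where w: "w \<in> W" "w \<noteq> 0\<^sub>v 1" by auto
    have wc: "w \<in> carrier_vec 1" using w Wsub by auto
    have w0: "w $ 0 \<noteq> 0"
    proof
      assume "w $ 0 = 0"
      then have "w = 0\<^sub>v 1" using wc by (intro eq_vecI, auto)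
      then show False using w by simp
    qed
    have "carrier_vec 1 \<subseteq> W"
    proof
      fix v :: "complex vec" assume v: "v \<in> carrier_vec 1"
      have "v = (v $ 0 / w $ 0) \<cdot>\<^sub>v w" using v wc w0 by (intro eq_vecI, auto)
      then show "v \<in> W" using Wsm w by metis
    qed
    then show ?thesis using Wsub by auto
  qed
qed

lemma one_in_cd:
  assumes "group G"
  shows "1 \<in> cd G"
proof -
  have "character_of G (\<lambda>g. 1\<^sub>m 1) \<in> Irr G" unfolding Irr_def using triv_irr[OF assms] by blast
  moreover have "character_of G (\<lambda>g. 1\<^sub>m 1) \<one>\<^bsub>G\<^esub> = 1"
    unfolding character_of_def mat_trace_def using monoid.one_closed[OF group.is_monoid[OF assms]] by simp
  ultimately show ?thesis unfolding cd_def by force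
qed

context group begin

lemma main_aux:
  fixes N :: "'a set" and \<chi> :: "'a \<Rightarrow> complex"
  assumes "group G" and "finite (carrier G)"
    and "GVZ G" and "card (cd G) = 2"
    and "N \<lhd> G"
    and "\<not> derived G (carrier G) \<subseteq> N"
    and "\<chi> \<in> nl G"
    and "comm_subgroup G (char_center G \<chi>) (carrier G) \<subseteq> N"
  shows "group_center (G Mod N) = (\<lambda>z. N #>\<^bsub>G\<^esub> z) ` char_center G \<chi>"
proof -
  note fin = assms(2) and gvz = assms(3) and cd2 = assms(4) and nN = assms(5)
  have sN: "subgroup N G" using normal_imp_subgroup[OF nN] .
  have Nsub: "N \<subseteq> carrier G" using subgroup.subset[OF sN] .
  obtain n1 \<rho>1 where irr1: "irr_rep G n1 \<rho>1" and chi: "\<chi> = character_of G \<rho>1"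
    using assms(7) unfolding nl_def Irr_def by blast
  have rep1: "is_rep G n1 \<rho>1" using irr1 unfolding irr_rep_def by auto
  have chi1: "\<chi> \<one> = of_nat n1" using chi char_one[OF rep1] by simp
  have chine: "\<chi> \<one> \<noteq> 1" using assms(7) unfolding nl_def by simp
  have n1cd: "of_nat n1 \<in> cd G"
  proof -
    have "\<chi> \<in> Irr G" using assms(7) unfolding nl_def by simp
    then have "\<chi> \<one> \<in> cd G" unfolding cd_def by (rule imageI)
    then show ?thesis using chi1 by simp
  qed
  have cdeq: "cd G = {1, of_nat n1}"
  proof -
    have sub: "{1, of_nat n1} \<subseteq> cd G" using one_in_cd[OF assms(1)] n1cd by simp
    have "card {1, (of_nat n1 :: complex)} = 2" using chine chi1 by simp
    moreover have "finite (cd G)" using cd2 card.infinite by fastforce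
    ultimately show ?thesis using sub cd2 by (metis card_subset_eq)
  qed
  obtain n2 \<rho>2 where irr2: "irr_rep G n2 \<rho>2" and ker2: "\<forall>h\<in>N. \<rho>2 h = 1\<^sub>m n2" and n2ne: "n2 \<noteq> 1"
    using exists_nonlinear_irr[OF fin nN assms(6)] by blast
  have rep2: "is_rep G n2 \<rho>2" using irr2 unfolding irr_rep_def by auto
  have "of_nat n2 \<in> cd G"
  proof -
    have "character_of G \<rho>2 \<one> \<in> cd G" unfolding cd_def by (rule imageI[OF irr_in_Irr[OF irr2]])
    then show ?thesis using char_one[OF rep2] by simp
  qed
  then have "(of_nat n2 :: complex) = of_nat n1" using cdeq n2ne by auto
  then have n21: "n2 = n1" by simp
  let ?Z1 = "char_center G \<chi>"
  let ?Z2 = "char_center G (character_of G \<rho>2)"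
  have comm_ker: "\<And>x. x \<in> carrier G \<Longrightarrow> (\<forall>g\<in>carrier G. x \<otimes> g \<otimes> inv x \<otimes> inv g \<in> N) \<Longrightarrow> x \<in> ?Z2"
  proof -
    fix x assume x: "x \<in> carrier G" and c: "\<forall>g\<in>carrier G. x \<otimes> g \<otimes> inv x \<otimes> inv g \<in> N"
    have "\<forall>g\<in>carrier G. \<rho>2 x * \<rho>2 g = \<rho>2 g * \<rho>2 x"
      using rep_commute_from_kernel[OF rep2 x] c ker2 by blast
    then show "x \<in> ?Z2" by (rule commuting_in_center[OF irr2 fin x])
  qed
  have Z1comm: "\<And>z g. z \<in> ?Z1 \<Longrightarrow> g \<in> carrier G \<Longrightarrow> z \<otimes> g \<otimes> inv z \<otimes> inv g \<in> N"
  proof -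
    fix z g assume z: "z \<in> ?Z1" and g: "g \<in> carrier G"
    have "z \<otimes> g \<otimes> inv z \<otimes> inv g \<in> comm_subgroup G ?Z1 (carrier G)"
      unfolding comm_subgroup_def using z g by (blast intro: generate.incl)
    then show "z \<otimes> g \<otimes> inv z \<otimes> inv g \<in> N" using assms(8) by blast
  qed
  have Z1sub: "?Z1 \<subseteq> carrier G" unfolding char_center_def by auto
  have Z12: "?Z1 \<subseteq> ?Z2" using comm_ker Z1comm Z1sub by blast
  have finZ2: "finite ?Z2" using fin unfolding char_center_def by auto
  have i1: "real (card ?Z1) * (real n1)^2 = real (Coset.order G)" using gvz_index[OF gvz irr1 fin] chi by simp
  have i2: "real (card ?Z2) * (real n1)^2 = real (Coset.order G)" using gvz_index[OF gvz irr2 fin] n21 by simp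
  have n1pos: "n1 > 0" using rep_pos[OF rep1] .
  have "real (card ?Z1) * (real n1)^2 = real (card ?Z2) * (real n1)^2" using i1 i2 by simp
  moreover have "(real n1)^2 \<noteq> 0" using n1pos by simp
  ultimately have "real (card ?Z1) = real (card ?Z2)" by (metis mult_right_cancel)
  then have "card ?Z1 = card ?Z2" by simp
  then have Zeq: "?Z1 = ?Z2" using card_subset_eq[OF finZ2 Z12] by simp
  have carrQ: "carrier (G Mod N) = rcosets N" unfolding FactGroup_def by simp
  have multQ: "\<And>C1 C2. C1 \<otimes>\<^bsub>G Mod N\<^esub> C2 = C1 <#> C2" unfolding FactGroup_def by simp
  have cos_comm: "\<And>x g. x \<in> carrier G \<Longrightarrow> g \<in> carrier G \<Longrightarrow>
      ((N #> x) <#> (N #> g) = (N #> g) <#> (N #> x)) = (x \<otimes> g \<otimes> inv x \<otimes> inv g \<in> N)"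
  proof -
    fix x g assume x: "x \<in> carrier G" and g: "g \<in> carrier G"
    have "((N #> x) <#> (N #> g) = (N #> g) <#> (N #> x)) = (N #> (x \<otimes> g) = N #> (g \<otimes> x))"
      using normal.rcos_sum[OF nN] x g by simp
    also have "\<dots> = ((x \<otimes> g) \<otimes> inv (g \<otimes> x) \<in> N)" using coset_eq_iff[OF sN] x g by simp
    also have "(x \<otimes> g) \<otimes> inv (g \<otimes> x) = x \<otimes> g \<otimes> inv x \<otimes> inv g" using x g by (simp add: inv_mult_group m_assoc)
    finally show "((N #> x) <#> (N #> g) = (N #> g) <#> (N #> x)) = (x \<otimes> g \<otimes> inv x \<otimes> inv g \<in> N)" .
  qed
  show ?thesis
  proof
    show "group_center (G Mod N) \<subseteq> (\<lambda>z. N #> z) ` ?Z1"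
    proof
      fix C1 assume C1: "C1 \<in> group_center (G Mod N)"
      then have XR: "C1 \<in> rcosets N" and Xc: "\<forall>C2\<in>rcosets N. C1 <#> C2 = C2 <#> C1"
        unfolding group_center_def carrQ multQ by auto
      obtain x where x: "x \<in> carrier G" "C1 = N #> x" using rcosets_elem[OF sN XR] by blast
      have "\<forall>g\<in>carrier G. x \<otimes> g \<otimes> inv x \<otimes> inv g \<in> N"
      proof
        fix g assume g: "g \<in> carrier G"
        have "N #> g \<in> rcosets N" using rcosetsI[OF Nsub g] .
        then have "(N #> x) <#> (N #> g) = (N #> g) <#> (N #> x)" using Xc x by simp
        then show "x \<otimes> g \<otimes> inv x \<otimes> inv g \<in> N" using cos_comm[OF x(1) g] by simp
      qed
      then have "x \<in> ?Z2" using comm_ker[OF x(1)] by simp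
      then have "x \<in> ?Z1" using Zeq by simp
      then show "C1 \<in> (\<lambda>z. N #> z) ` ?Z1" using x by blast
    qed
    show "(\<lambda>z. N #> z) ` ?Z1 \<subseteq> group_center (G Mod N)"
    proof
      fix C1 assume "C1 \<in> (\<lambda>z. N #> z) ` ?Z1"
      then obtain z where z: "z \<in> ?Z1" "C1 = N #> z" by blast
      have zc: "z \<in> carrier G" using z Z1sub by auto
      have XR: "C1 \<in> rcosets N" using rcosetsI[OF Nsub zc] z by simp
      have "\<forall>C2\<in>rcosets N. C1 <#> C2 = C2 <#> C1"
      proof
        fix C2 assume C2: "C2 \<in> rcosets N"
        obtain g where g: "g \<in> carrier G" "C2 = N #> g" using rcosets_elem[OF sN C2] by blast
        show "C1 <#> C2 = C2 <#> C1" using cos_comm[OF zc g(1)] Z1comm[OF z(1) g(1)] z g by simp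
      qed
      then show "C1 \<in> group_center (G Mod N)" unfolding group_center_def carrQ multQ using XR by auto
    qed
  qed
qed

end

theorem mainTheorem11:
  fixes G :: "('a, 'b) monoid_scheme" and N :: "'a set" and \<chi> :: "'a \<Rightarrow> complex"
  assumes "group G" and "finite (carrier G)"
    and "GVZ G" and "card (cd G) = 2"
    and "N \<lhd> G"
    and "\<not> derived G (carrier G) \<subseteq> N"
    and "\<chi> \<in> nl G"
    and "comm_subgroup G (char_center G \<chi>) (carrier G) \<subseteq> N"
  shows "group_center (G Mod N) = (\<lambda>z. N #>\<^bsub>G\<^esub> z) ` char_center G \<chi>"
  using group.main_aux[OF assms(1) assms] .

end
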